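(* For each $y\in\mathbb Y$ such that the Riccati equations with parameter $y$ have a global solution $(\Phi_y,\Psi_y)$, the Volterra integral operator $$\mathcal I_y:C(\mathbb R_+)\to\{h\in C^1(\mathbb R_+):h(0)=0\},\qquad \mathcal I_y(\theta)(\tau)=\int_0^\tau\theta(s)\langle\Psi_y'(\tau-s),e_1\rangle ds,$$ is well defined and bijective.
   Context: $d\ge1$, $e_1$ the first canonical basis vector of $\mathbb R^d$, $\langle\cdot,\cdot\rangle$ the Euclidean inner product. For a parameter $y$ there are symmetric positive semidefinite $a_y,\alpha_y^1,\dots,\alpha_y^d\in\mathbb R^{d\times d}$ and $b_y,\beta_y^1,\dots,\beta_y^d\in\mathbb R^d$. Fix $\lambda\in\mathbb R^d$ with $\langle\lambda,e_1\rangle\ne0$. With $F_y(u)=\tfrac12\langle u,a_yu\rangle+\langle u,b_y\rangle$ and $R_y^i(u)=\tfrac12\langle u,\alpha_y^iu\rangle+\langle u,\beta_y^i\rangle$, the Riccati equations are $\Phi_y'=F_y\circ\Psi_y$, $\Phi_y(0)=0$, $\Psi_y'=R_y\circ\Psi_y-\lambda$, $\Psi_y(0)=0$, with $\Phi_y\in C^\infty(\mathbb R_+)$, $\Psi_y\in C^\infty(\mathbb R_+;\mathbb R^d)$. *)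

theory Defs
  imports "HOL-Analysis.Analysis"
begin

text \<open>First canonical basis vector of real^'n; the index type is well-ordered, its least
  element plays the role of the index 1.\<close>
definition e1 :: "real ^ 'n::{finite,wellorder}" where
  "e1 = axis (LEAST i::'n. True) 1"

definition sym_psd :: "real ^ 'n ^ 'n \<Rightarrow> bool" where
  "sym_psd A \<longleftrightarrow> transpose A = A \<and> (\<forall>u. 0 \<le> u \<bullet> (A *v u))"

definition quad :: "real ^ 'n ^ 'n \<Rightarrow> real ^ 'n \<Rightarrow> real ^ 'n \<Rightarrow> real" where
  "quad A c u = (1/2) * (u \<bullet> (A *v u)) + u \<bullet> c"

definition Rvec :: "('n \<Rightarrow> real ^ 'n ^ 'n) \<Rightarrow> ('n \<Rightarrow> real ^ 'n) \<Rightarrow> real ^ 'n \<Rightarrow> real ^ 'n" where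
  "Rvec \<alpha> \<beta> u = (\<chi> i. quad (\<alpha> i) (\<beta> i) u)"

definition smooth_Rplus :: "(real \<Rightarrow> 'b::real_normed_vector) \<Rightarrow> bool" where
  "smooth_Rplus f \<longleftrightarrow> (\<exists>D::nat \<Rightarrow> real \<Rightarrow> 'b. D 0 = f \<and>
     (\<forall>k. \<forall>t\<ge>0. (D k has_vector_derivative D (Suc k) t) (at t within {0..})))"

definition riccati_solution ::
  "real ^ 'n ^ 'n \<Rightarrow> real ^ 'n \<Rightarrow> ('n \<Rightarrow> real ^ 'n ^ 'n) \<Rightarrow> ('n \<Rightarrow> real ^ 'n) \<Rightarrow> real ^ 'n
   \<Rightarrow> (real \<Rightarrow> real) \<Rightarrow> (real \<Rightarrow> real ^ 'n) \<Rightarrow> bool" where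
  "riccati_solution a b \<alpha> \<beta> lam \<Phi> \<Psi> \<longleftrightarrow>
     smooth_Rplus \<Phi> \<and> smooth_Rplus \<Psi> \<and> \<Phi> 0 = 0 \<and> \<Psi> 0 = 0 \<and>
     (\<forall>t\<ge>0. (\<Phi> has_vector_derivative quad a b (\<Psi> t)) (at t within {0..})) \<and>
     (\<forall>t\<ge>0. (\<Psi> has_vector_derivative (Rvec \<alpha> \<beta> (\<Psi> t) - lam)) (at t within {0..}))"

text \<open>C(R_+), functions represented as real => real vanishing on the negative axis.\<close>
definition C_Rplus :: "(real \<Rightarrow> real) set" where
  "C_Rplus = {\<theta>. continuous_on {0..} \<theta> \<and> (\<forall>t<0. \<theta> t = 0)}"

definition C1_Rplus_0 :: "(real \<Rightarrow> real) set" where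
  "C1_Rplus_0 = {h. (\<exists>h'. continuous_on {0..} h' \<and>
       (\<forall>t\<ge>0. (h has_real_derivative h' t) (at t within {0..}))) \<and>
       h 0 = 0 \<and> (\<forall>t<0. h t = 0)}"

definition volterra_op :: "(real \<Rightarrow> real ^ 'n::{finite,wellorder}) \<Rightarrow> (real \<Rightarrow> real) \<Rightarrow> real \<Rightarrow> real" where
  "volterra_op \<Psi> \<theta> = (\<lambda>\<tau>. if 0 \<le> \<tau> then
      integral {0..\<tau>} (\<lambda>s. \<theta> s * (vector_derivative \<Psi> (at (\<tau> - s) within {0..}) \<bullet> e1))
    else 0)"

end

theory Submission
  imports Defs "HOL-Analysis.Analysis"
begin


lemma ext_deriv:
  fixes g g' :: "real \<Rightarrow> real"
  assumes gd: "\<And>t. t \<ge> 0 \<Longrightarrow> (g has_real_derivative g' t) (at t within {0..})"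
  shows "((\<lambda>u. if u \<in> {0..} then g u else g 0 + g' 0 * u) has_real_derivative g' (max u 0)) (at u)"
proof -
  have cl1: "closure {0::real..} = {0..}" by simp
  have cl2: "closure {..<0::real} = {..0}" by simp
  have un: "{0::real..} \<union> {..<0} = UNIV" by auto
  have "((\<lambda>u. if u \<in> {0..} then g u else g 0 + g' 0 * u) has_derivative
      (if u \<in> {0..} then (*) (g' u) else (*) (g' 0))) (at u within ({0..} \<union> {..<0}))"
  proof (rule has_derivative_If_within_closures)
    assume "u \<in> {0..} \<union> (closure {0..} \<inter> closure {..<0})"
    then have "u \<ge> 0" by auto
    moreover have "{0..} \<union> (closure {0..} \<inter> closure {..<0}) = {0::real..}" by (auto simp: cl1 cl2)
    ultimately show "(g has_derivative (*) (g' u)) (at u within {0..} \<union> (closure {0..} \<inter> closure {..<0}))"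
      using gd[of u] by (simp add: has_field_derivative_def)
  next
    assume "u \<in> {..<0} \<union> (closure {0..} \<inter> closure {..<0})"
    show "((\<lambda>u. g 0 + g' 0 * u) has_derivative (*) (g' 0)) (at u within {..<0} \<union> (closure {0..} \<inter> closure {..<0}))"
      by (auto intro!: derivative_eq_intros)
  next
    show "u \<in> closure {0..} \<Longrightarrow> u \<in> closure {..<0} \<Longrightarrow> g u = g 0 + g' 0 * u" by (auto simp: cl1 cl2)
    show "u \<in> closure {0..} \<Longrightarrow> u \<in> closure {..<0} \<Longrightarrow> (*) (g' u) = (*) (g' 0)" by (auto simp: cl1 cl2)
  qed auto
  moreover have "(if u \<in> {0..} then (*) (g' u) else (*) (g' 0)) = (*) (g' (max u 0))"
    by (auto simp: max_def)
  ultimately show ?thesis unfolding un by (simp add: has_field_derivative_def)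
qed




lemma ftc0:
  fixes f :: "real \<Rightarrow> real"
  assumes "continuous_on {0..} f" "y \<ge> 0"
  shows "((\<lambda>u. integral {0..u} f) has_real_derivative f y) (at y within {0..})"
proof -
  have "continuous_on {0..y+1} f" using assms(1) by (rule continuous_on_subset) auto
  from integral_has_real_derivative[OF this, of y] assms(2)
  have "((\<lambda>u. integral {0..u} f) has_real_derivative f y) (at y within {0..y+1})" by simp
  moreover have "at y within {0..y+1} = at y within {0..}"
    by (rule at_within_nhd[of _ "{..<y+1}"]) auto
  ultimately show ?thesis by simp
qed

lemma conv_deriv:
  fixes g g' \<theta> :: "real \<Rightarrow> real"
  assumes gd: "\<And>t. t \<ge> 0 \<Longrightarrow> (g has_real_derivative g' t) (at t within {0..})"
    and cg': "continuous_on {0..} g'" and c\<theta>: "continuous_on {0..} \<theta>" and \<tau>: "\<tau> \<ge> 0"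
  shows "((\<lambda>\<tau>. integral {0..\<tau>} (\<lambda>s. \<theta> s * g (\<tau> - s))) has_real_derivative
           (\<theta> \<tau> * g 0 + integral {0..\<tau>} (\<lambda>s. \<theta> s * g' (\<tau> - s)))) (at \<tau> within {0..})"
proof -
  define G where "G = (\<lambda>u. if u \<in> {0..} then g u else g 0 + g' 0 * u)"
  define G' where "G' = (\<lambda>u::real. g' (max u 0))"
  have Gd: "\<And>u. (G has_real_derivative G' u) (at u)"
    unfolding G_def G'_def by (rule ext_deriv[OF gd])
  have cG': "continuous_on UNIV G'"
    unfolding G'_def
    by (rule continuous_on_compose2[OF cg']) (auto intro!: continuous_intros)
  have cG: "continuous_on UNIV G"
    using Gd by (meson DERIV_isCont continuous_at_imp_continuous_on)
  define H where "H = (\<lambda>x y. integral {0..y} (\<lambda>s. \<theta> s * G (x - s)))"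
  have c\<theta>': "continuous_on A (\<lambda>p. \<theta> (snd p))" if "snd ` A \<subseteq> {0..}" for A :: "(real \<times> real) set"
    by (rule continuous_on_compose2[OF c\<theta>]) (use that in \<open>auto intro!: continuous_intros\<close>)
  have cGd: "continuous_on A (\<lambda>p. G (fst p - snd p))" for A :: "(real \<times> real) set"
    by (rule continuous_on_compose2[OF cG]) (auto intro!: continuous_intros)
  have cG'd: "continuous_on A (\<lambda>p. G' (fst p - snd p))" for A :: "(real \<times> real) set"
    by (rule continuous_on_compose2[OF cG']) (auto intro!: continuous_intros)
  have c1: "continuous_on {0..y} (\<lambda>s. \<theta> s * G (x - s))" for x y
    by (intro continuous_intros continuous_on_subset[OF c\<theta>] continuous_on_compose2[OF cG]) auto
  have fx: "((\<lambda>x. H x \<tau>) has_field_derivative integral {0..\<tau>} (\<lambda>s. \<theta> s * G' (\<tau> - s))) (at \<tau> within UNIV)"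
    unfolding H_def
  proof (rule leibniz_rule_field_derivative[where fx="\<lambda>x s. \<theta> s * G' (x - s)", of UNIV 0 \<tau>, simplified cbox_interval])
    fix x t :: real
    have "((\<lambda>x. G (x - t)) has_real_derivative G' (x - t) * 1) (at x)"
      by (rule DERIV_chain2[OF Gd]) (auto intro!: derivative_eq_intros)
    then show "((\<lambda>x. \<theta> t * G (x - t)) has_real_derivative \<theta> t * G' (x - t)) (at x)"
      using DERIV_cmult by fastforce
  next
    fix x :: real
    show "(\<lambda>s. \<theta> s * G (x - s)) integrable_on {0..\<tau>}"
      by (rule integrable_continuous_interval[OF c1])
  next
    have "continuous_on (UNIV \<times> {0..\<tau>}) (\<lambda>p. \<theta> (snd p) * G' (fst p - snd p))"
      by (intro continuous_intros c\<theta>' cG'd) auto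
    then show "continuous_on (UNIV \<times> {0..\<tau>}) (\<lambda>(x, s). \<theta> s * G' (x - s))"
      by (simp add: case_prod_beta)
  qed auto
  have fy: "((\<lambda>y. H x y) has_derivative blinfun_apply (blinfun_mult_right (\<theta> y * G (x - y)))) (at y within {0..})"
    if "y \<in> {0..}" for x y
  proof -
    have "continuous_on {0..} (\<lambda>s. \<theta> s * G (x - s))"
      by (intro continuous_intros c\<theta> continuous_on_compose2[OF cG]) auto
    from ftc0[OF this] that
    show ?thesis unfolding H_def has_field_derivative_eq_has_derivative_blinfun[symmetric] by simp
  qed
  have cfy: "continuous (at (\<tau>, \<tau>) within UNIV \<times> {0..}) (\<lambda>(x, y). blinfun_mult_right (\<theta> y * G (x - y)))"
  proof -
    have "continuous_on (UNIV \<times> {0..}) (\<lambda>p. \<theta> (snd p) * G (fst p - snd p))"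
      by (intro continuous_intros c\<theta>' cGd) auto
    then have "continuous (at (\<tau>, \<tau>) within UNIV \<times> {0..}) (\<lambda>p. \<theta> (snd p) * G (fst p - snd p))"
      using \<tau> by (simp add: continuous_on_eq_continuous_within)
    then have "continuous (at (\<tau>, \<tau>) within UNIV \<times> {0..}) (\<lambda>p. blinfun_mult_right (\<theta> (snd p) * G (fst p - snd p)))"
      by (rule bounded_linear.continuous[OF bounded_linear_blinfun_mult_right])
    then show ?thesis by (simp add: case_prod_unfold)
  qed
  have P: "((\<lambda>(x, y). H x y) has_derivative
     (\<lambda>(tx, ty). integral {0..\<tau>} (\<lambda>s. \<theta> s * G' (\<tau> - s)) * tx + blinfun_apply (blinfun_mult_right (\<theta> \<tau> * G (\<tau> - \<tau>))) ty))
     (at (\<tau>, \<tau>) within UNIV \<times> {0..})"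
    using has_derivative_partialsI[OF fx[unfolded has_field_derivative_def] fy cfy] \<tau>
    by (simp add: mult.commute)
  have D: "((\<lambda>t. (t, t)) has_derivative (\<lambda>h. (h, h))) (at \<tau> within {0..})"
    by (auto intro!: derivative_eq_intros)
  have "((\<lambda>t. (\<lambda>(x, y). H x y) (t, t)) has_derivative
     (\<lambda>h. (\<lambda>(tx, ty). integral {0..\<tau>} (\<lambda>s. \<theta> s * G' (\<tau> - s)) * tx + blinfun_apply (blinfun_mult_right (\<theta> \<tau> * G (\<tau> - \<tau>))) ty) (h, h))) (at \<tau> within {0..})"
    by (rule has_derivative_in_compose[OF D has_derivative_subset[OF P]]) auto
  note C1 = this
  have "((\<lambda>t. H t t) has_real_derivative (\<theta> \<tau> * G 0 + integral {0..\<tau>} (\<lambda>s. \<theta> s * G' (\<tau> - s)))) (at \<tau> within {0..})"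
    unfolding has_field_derivative_def
  proof (rule has_derivative_eq_rhs)
    show "((\<lambda>t. H t t) has_derivative (\<lambda>h. integral {0..\<tau>} (\<lambda>s. \<theta> s * G' (\<tau> - s)) * h + blinfun_apply (blinfun_mult_right (\<theta> \<tau> * G (\<tau> - \<tau>))) h)) (at \<tau> within {0..})"
      using C1 by simp
  qed (auto simp: algebra_simps fun_eq_iff)
  moreover have "\<theta> \<tau> * G 0 + integral {0..\<tau>} (\<lambda>s. \<theta> s * G' (\<tau> - s)) = \<theta> \<tau> * g 0 + integral {0..\<tau>} (\<lambda>s. \<theta> s * g' (\<tau> - s))"
    unfolding G_def G'_def by (auto intro!: integral_cong)
  ultimately have "((\<lambda>t. H t t) has_real_derivative (\<theta> \<tau> * g 0 + integral {0..\<tau>} (\<lambda>s. \<theta> s * g' (\<tau> - s)))) (at \<tau> within {0..})"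
    by simp
  then show ?thesis
    by (rule has_field_derivative_transform_within[OF _ zero_less_one]) (use \<tau> in \<open>auto simp: H_def G_def intro!: integral_cong\<close>)
qed




lemma conv_bound:
  fixes u k :: "real \<Rightarrow> real"
  assumes cu: "continuous_on {0..} u" and ck: "continuous_on {0..} k"
    and bu: "\<And>s. s \<in> {0..T} \<Longrightarrow> \<bar>u s\<bar> \<le> A * (B * s)^n / fact n"
    and bk: "\<And>s. s \<in> {0..T} \<Longrightarrow> \<bar>k s\<bar> \<le> B" and \<tau>: "0 \<le> \<tau>" "\<tau> \<le> T"
  shows "\<bar>integral {0..\<tau>} (\<lambda>s. u s * k (\<tau> - s))\<bar> \<le> A * (B * \<tau>)^Suc n / fact (Suc n)"
proof -
  define F where "F = (\<lambda>s::real. A * (B * s)^Suc n / fact (Suc n))"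
  have Fd: "(F has_vector_derivative A * B * (B * s) ^ n / fact n) (at s within {0..\<tau>})" for s
  proof -
    have l: "((\<lambda>s. B * s) has_real_derivative B) (at s within {0..\<tau>})"
      using DERIV_cmult[OF DERIV_ident] by simp
    have "((\<lambda>s. A / fact (Suc n) * (B * s) ^ Suc n) has_real_derivative
        A / fact (Suc n) * (of_nat (Suc n) * (B * (B * s) ^ (Suc n - Suc 0)))) (at s within {0..\<tau>})"
      by (rule DERIV_cmult[OF DERIV_power[OF l]])
    moreover have "A / fact (Suc n) * (of_nat (Suc n) * (B * (B * s) ^ (Suc n - Suc 0))) = A * B * (B * s) ^ n / fact n"
      by (simp add: fact_Suc field_simps del: of_nat_Suc)
    moreover have "(\<lambda>s. A / fact (Suc n) * (B * s) ^ Suc n) = F"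
      by (simp add: F_def fun_eq_iff)
    ultimately show ?thesis by (simp add: has_real_derivative_iff_has_vector_derivative mult.assoc)
  qed
  have I: "((\<lambda>s. A * B * (B * s)^n / fact n) has_integral (F \<tau> - F 0)) {0..\<tau>}"
    by (rule fundamental_theorem_of_calculus) (use \<tau> Fd in auto)
  have cint: "(\<lambda>s. u s * k (\<tau> - s)) integrable_on {0..\<tau>}"
    by (rule integrable_continuous_interval)
       (intro continuous_intros continuous_on_subset[OF cu] continuous_on_compose2[OF ck], auto)
  have "norm (integral {0..\<tau>} (\<lambda>s. u s * k (\<tau> - s))) \<le> integral {0..\<tau>} (\<lambda>s. A * B * (B * s)^n / fact n)"
  proof (rule integral_norm_bound_integral[OF cint])
    show "(\<lambda>s. A * B * (B * s)^n / fact n) integrable_on {0..\<tau>}" using I by blast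
    fix s assume s: "s \<in> {0..\<tau>}"
    have a: "\<bar>u s\<bar> \<le> A * (B * s)^n / fact n" using bu[of s] s \<tau> by auto
    have b: "\<bar>k (\<tau> - s)\<bar> \<le> B" using bk[of "\<tau> - s"] s \<tau> by auto
    have "\<bar>u s\<bar> * \<bar>k (\<tau> - s)\<bar> \<le> (A * (B * s)^n / fact n) * B"
      by (rule mult_mono[OF a b]) (use a in auto)
    then show "norm (u s * k (\<tau> - s)) \<le> A * B * (B * s)^n / fact n"
      by (simp add: abs_mult field_simps)
  qed
  also have "\<dots> = F \<tau> - F 0" by (rule integral_unique[OF I])
  also have "\<dots> = A * (B * \<tau>)^Suc n / fact (Suc n)" by (simp add: F_def)
  finally show ?thesis by simp
qed




lemma cont_bound:
  fixes f :: "real \<Rightarrow> real"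
  assumes "continuous_on {0..} f"
  shows "\<exists>M\<ge>0. \<forall>s\<in>{0..T}. \<bar>f s\<bar> \<le> M"
proof -
  have "continuous_on {0..T} f" using assms by (rule continuous_on_subset) auto
  then have "bounded (f ` {0..T})" by (intro compact_imp_bounded compact_continuous_image) auto
  then obtain B where "B > 0" "\<forall>x\<in>f ` {0..T}. norm x \<le> B" by (auto simp: bounded_pos)
  then show ?thesis by (intro exI[of _ B]) auto
qed

lemma conv_cont:
  fixes k k' u :: "real \<Rightarrow> real"
  assumes kd: "\<And>t. t \<ge> 0 \<Longrightarrow> (k has_real_derivative k' t) (at t within {0..})"
    and ck': "continuous_on {0..} k'" and cu: "continuous_on {0..} u"
  shows "continuous_on {0..} (\<lambda>\<tau>. integral {0..\<tau>} (\<lambda>s. u s * k (\<tau> - s)))"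
  unfolding continuous_on_eq_continuous_within
proof
  fix x :: real assume "x \<in> {0..}"
  then show "continuous (at x within {0..}) (\<lambda>\<tau>. integral {0..\<tau>} (\<lambda>s. u s * k (\<tau> - s)))"
    using conv_deriv[OF kd ck' cu, of x] by (auto intro: DERIV_continuous)
qed

lemma deriv_cont:
  fixes k k' :: "real \<Rightarrow> real"
  assumes kd: "\<And>t. t \<ge> 0 \<Longrightarrow> (k has_real_derivative k' t) (at t within {0..})"
  shows "continuous_on {0..} k"
  unfolding continuous_on_eq_continuous_within
  using kd by (auto intro: DERIV_continuous)

lemma iter_bound:
  fixes k k' u :: "real \<Rightarrow> real"
  assumes ck: "continuous_on {0..} k"
    and cu: "continuous_on {0..} u"
    and eq: "\<And>\<tau>. \<tau> \<ge> 0 \<Longrightarrow> u \<tau> = - integral {0..\<tau>} (\<lambda>s. u s * k (\<tau> - s))"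
    and bu: "\<And>s. s \<in> {0..T} \<Longrightarrow> \<bar>u s\<bar> \<le> A"
    and bk: "\<And>s. s \<in> {0..T} \<Longrightarrow> \<bar>k s\<bar> \<le> B"
  shows "\<forall>s\<in>{0..T}. \<bar>u s\<bar> \<le> A * (B * s)^n / fact n"
proof (induction n)
  case 0 then show ?case using bu by simp
next
  case (Suc n)
  show ?case
  proof
    fix s assume s: "s \<in> {0..T}"
    have "\<bar>u s\<bar> = \<bar>integral {0..s} (\<lambda>r. u r * k (s - r))\<bar>" using eq[of s] s by simp
    also have "\<dots> \<le> A * (B * s)^Suc n / fact (Suc n)"
      by (rule conv_bound[OF cu ck _ bk]) (use Suc s in auto)
    finally show "\<bar>u s\<bar> \<le> A * (B * s)^Suc n / fact (Suc n)" .
  qed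
qed

lemma volterra_unique:
  fixes k u :: "real \<Rightarrow> real"
  assumes ck: "continuous_on {0..} k"
    and cu: "continuous_on {0..} u"
    and eq: "\<And>\<tau>. \<tau> \<ge> 0 \<Longrightarrow> u \<tau> = - integral {0..\<tau>} (\<lambda>s. u s * k (\<tau> - s))"
    and \<tau>: "\<tau> \<ge> 0"
  shows "u \<tau> = 0"
proof -
  obtain A where A: "A \<ge> 0" "\<forall>s\<in>{0..\<tau>}. \<bar>u s\<bar> \<le> A" using cont_bound[OF cu] by blast
  obtain B where B: "B \<ge> 0" "\<forall>s\<in>{0..\<tau>}. \<bar>k s\<bar> \<le> B" using cont_bound[OF ck] by blast
  have le: "\<bar>u \<tau>\<bar> \<le> A * ((B * \<tau>)^n / fact n)" for n
    using iter_bound[OF ck cu eq, of \<tau> A B n] A B \<tau> by auto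
  have "(\<lambda>n. (B * \<tau>)^n /\<^sub>R fact n) \<longlonglongrightarrow> 0"
    by (rule summable_LIMSEQ_zero[OF summable_exp_generic])
  then have "(\<lambda>n. A * ((B * \<tau>)^n / fact n)) \<longlonglongrightarrow> A * 0"
    by (intro tendsto_mult tendsto_const) (simp add: divide_inverse_commute)
  then have "\<bar>u \<tau>\<bar> \<le> 0"
    by (intro tendsto_lowerbound[OF _ always_eventually]) (use le in auto)
  then show ?thesis by simp
qed




lemma conv_int:
  fixes k u :: "real \<Rightarrow> real"
  assumes ck: "continuous_on {0..} k" and cu: "continuous_on {0..} u"
  shows "continuous_on {0..\<tau>} (\<lambda>s. u s * k (\<tau> - s))"
  by (intro continuous_intros continuous_on_subset[OF cu] continuous_on_compose2[OF ck]) auto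

lemma volterra_exists:
  fixes k k' f :: "real \<Rightarrow> real"
  assumes kd: "\<And>t. t \<ge> 0 \<Longrightarrow> (k has_real_derivative k' t) (at t within {0..})"
    and ck': "continuous_on {0..} k'" and cf: "continuous_on {0..} f"
  shows "\<exists>\<theta>. continuous_on {0..} \<theta> \<and> (\<forall>\<tau>\<ge>0. \<theta> \<tau> = f \<tau> - integral {0..\<tau>} (\<lambda>s. \<theta> s * k (\<tau> - s)))"
proof -
  have ck: "continuous_on {0..} k" by (rule deriv_cont[OF kd])
  define V where "V = (\<lambda>(u::real \<Rightarrow> real) \<tau>. integral {0..\<tau>} (\<lambda>s::real. u s * k (\<tau> - s)))"
  define d where "d = (\<lambda>n. ((\<lambda>u \<tau>. - V u \<tau>) ^^ n) f)"
  have d0: "d 0 = f" by (simp add: d_def)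
  have dS: "d (Suc n) = (\<lambda>\<tau>. - V (d n) \<tau>)" for n by (simp add: d_def)
  have cd: "continuous_on {0..} (d n)" for n
  proof (induction n)
    case 0 then show ?case using cf d0 by simp
  next
    case (Suc n)
    show ?case unfolding dS V_def
      by (intro continuous_intros conv_cont[OF kd ck' Suc])
  qed
  define S where "S = (\<lambda>n x. \<Sum>i<n. d i x)"
  define \<theta> where "\<theta> = (\<lambda>x. \<Sum>i. d i x)"
  have cS: "continuous_on {0..} (S n)" for n
    unfolding S_def by (intro continuous_intros cd)
  have unif: "uniform_limit {0..T} S \<theta> sequentially" for T
  proof -
    obtain A where A: "A \<ge> 0" "\<forall>s\<in>{0..T}. \<bar>f s\<bar> \<le> A" using cont_bound[OF cf] by blast
    obtain B where B: "B \<ge> 0" "\<forall>s\<in>{0..T}. \<bar>k s\<bar> \<le> B" using cont_bound[OF ck] by blast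
    have bd: "\<forall>s\<in>{0..T}. \<bar>d n s\<bar> \<le> A * (B * s)^n / fact n" for n
    proof (induction n)
      case 0 then show ?case using A d0 by simp
    next
      case (Suc n)
      show ?case
      proof
        fix s assume s: "s \<in> {0..T}"
        have "\<bar>d (Suc n) s\<bar> = \<bar>integral {0..s} (\<lambda>r. d n r * k (s - r))\<bar>" by (simp add: dS V_def)
        also have "\<dots> \<le> A * (B * s)^Suc n / fact (Suc n)"
          by (rule conv_bound[OF cd ck _ ]) (use Suc s B in auto)
        finally show "\<bar>d (Suc n) s\<bar> \<le> A * (B * s)^Suc n / fact (Suc n)" .
      qed
    qed
    have M: "norm (d n s) \<le> A * ((B * T)^n / fact n)" if s: "s \<in> {0..T}" for n s
    proof -
      have "(B * s)^n \<le> (B * T)^n" using s B by (intro power_mono mult_left_mono) auto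
      then have "A * (B * s)^n / fact n \<le> A * ((B * T)^n / fact n)"
        using A by (simp add: divide_right_mono mult_left_mono divide_simps)
      then show ?thesis using bd[of n] s by force
    qed
    have sm: "summable (\<lambda>n. A * ((B * T)^n / fact n))"
      using summable_mult[OF summable_exp_generic[of "B * T"], of A] by (simp add: divide_inverse_commute)
    show ?thesis unfolding S_def \<theta>_def
      by (rule Weierstrass_m_test[OF M sm])
  qed
  have c\<theta>: "continuous_on {0..} \<theta>"
    unfolding continuous_on_eq_continuous_within
  proof
    fix x :: real assume x: "x \<in> {0..}"
    have "continuous_on {0..x+1} \<theta>"
      by (rule uniform_limit_theorem[OF _ unif]) (auto intro!: always_eventually continuous_on_subset[OF cS])
    then have "continuous (at x within {0..x+1}) \<theta>"
      using x by (simp add: continuous_on_eq_continuous_within)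
    moreover have "at x within {0..x+1} = at x within {0..}"
      by (rule at_within_nhd[of _ "{..<x+1}"]) auto
    ultimately show "continuous (at x within {0..}) \<theta>" by simp
  qed
  have eqn: "\<theta> \<tau> = f \<tau> - integral {0..\<tau>} (\<lambda>s. \<theta> s * k (\<tau> - s))" if \<tau>: "\<tau> \<ge> 0" for \<tau>
  proof -
    have "(\<lambda>n. S n \<tau>) \<longlonglongrightarrow> \<theta> \<tau>"
      by (rule tendsto_uniform_limitI[OF unif[of \<tau>]]) (use \<tau> in auto)
    then have lim1: "(\<lambda>n. S (Suc n) \<tau>) \<longlonglongrightarrow> \<theta> \<tau>" by (rule LIMSEQ_Suc)
    have SS: "S (Suc n) \<tau> = f \<tau> - V (S n) \<tau>" for n
    proof -
      have "S (Suc n) \<tau> = d 0 \<tau> + (\<Sum>i<n. d (Suc i) \<tau>)"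
        unfolding S_def by (rule sum.lessThan_Suc_shift)
      also have "\<dots> = f \<tau> - (\<Sum>i<n. V (d i) \<tau>)" by (simp add: d0 dS sum_negf)
      also have "(\<Sum>i<n. V (d i) \<tau>) = V (S n) \<tau>"
        unfolding V_def S_def sum_distrib_right
        by (rule integral_sum[symmetric]) (auto intro!: integrable_continuous_interval conv_int[OF ck cd])
      finally show ?thesis .
    qed
    have b\<theta>: "bounded (\<theta> ` {0..\<tau>})"
      by (intro compact_imp_bounded compact_continuous_image continuous_on_subset[OF c\<theta>]) auto
    have bk: "bounded ((\<lambda>s. k (\<tau> - s)) ` {0..\<tau>})"
      by (intro compact_imp_bounded compact_continuous_image continuous_on_compose2[OF ck]) (auto intro!: continuous_intros)
    have ul: "uniform_limit {0..\<tau>} (\<lambda>n s. S n s * k (\<tau> - s)) (\<lambda>s. \<theta> s * k (\<tau> - s)) sequentially"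
      by (rule uniform_lim_mult[OF unif uniform_limit_const b\<theta> bk])
    obtain I J where I: "\<And>n. ((\<lambda>s. S n s * k (\<tau> - s)) has_integral I n) {0..\<tau>}"
      and J: "((\<lambda>s. \<theta> s * k (\<tau> - s)) has_integral J) {0..\<tau>}" and IJ: "I \<longlonglongrightarrow> J"
      by (rule uniform_limit_integral[OF ul]) (auto intro!: conv_int[OF ck cS])
    have "(\<lambda>n. V (S n) \<tau>) = I" using I by (auto simp: V_def fun_eq_iff integral_unique)
    moreover have "V \<theta> \<tau> = J" using J by (simp add: V_def integral_unique)
    ultimately have "(\<lambda>n. V (S n) \<tau>) \<longlonglongrightarrow> V \<theta> \<tau>" using IJ by simp
    then have "(\<lambda>n. S (Suc n) \<tau>) \<longlonglongrightarrow> f \<tau> - V \<theta> \<tau>" unfolding SS by (intro tendsto_intros)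
    from LIMSEQ_unique[OF lim1 this] show ?thesis by (simp add: V_def)
  qed
  show ?thesis using c\<theta> eqn by blast
qed




lemma nb0: "t \<ge> 0 \<Longrightarrow> at t within {0::real..} \<noteq> bot"
proof -
  assume t: "t \<ge> 0"
  have "t islimpt {0..t+1}" using t by simp
  then have "t islimpt {0::real..}" by (rule islimpt_subset) auto
  then show ?thesis using trivial_limit_within by blast
qed

lemma inner_deriv:
  fixes F :: "real \<Rightarrow> real ^ 'n::{finite,wellorder}"
  assumes "(F has_vector_derivative v) (at t within S)"
  shows "((\<lambda>t. F t \<bullet> e1) has_real_derivative v \<bullet> e1) (at t within S)"
proof -
  have "((\<lambda>t. F t \<bullet> e1) has_derivative (\<lambda>h. (h *\<^sub>R v) \<bullet> e1)) (at t within S)"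
    using assms unfolding has_vector_derivative_def by (rule has_derivative_inner_left)
  moreover have "(\<lambda>h. (h *\<^sub>R v) \<bullet> e1) = (*) (v \<bullet> e1)" by (auto simp: fun_eq_iff)
  ultimately show ?thesis by (simp add: has_field_derivative_def)
qed

lemma Rvec_zero: "Rvec \<alpha> \<beta> 0 = 0"
  by (simp add: Rvec_def quad_def vec_eq_iff)

theorem mainTheorem5:
  fixes a :: "'y \<Rightarrow> real ^ ('n::{finite,wellorder}) ^ ('n::{finite,wellorder})"
    and \<alpha> :: "'y \<Rightarrow> ('n::{finite,wellorder}) \<Rightarrow> real ^ ('n::{finite,wellorder}) ^ ('n::{finite,wellorder})"
    and b :: "'y \<Rightarrow> real ^ ('n::{finite,wellorder})"
    and \<beta> :: "'y \<Rightarrow> ('n::{finite,wellorder}) \<Rightarrow> real ^ ('n::{finite,wellorder})"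
    and lam :: "real ^ ('n::{finite,wellorder})"
    and y :: 'y
    and \<Phi> :: "real \<Rightarrow> real" and \<Psi> :: "real \<Rightarrow> real ^ ('n::{finite,wellorder})"
  assumes "\<forall>y. sym_psd (a y) \<and> (\<forall>i. sym_psd (\<alpha> y i))"
    and "lam \<bullet> e1 \<noteq> 0"
    and "riccati_solution (a y) (b y) (\<alpha> y) (\<beta> y) lam \<Phi> \<Psi>"
  shows "volterra_op \<Psi> ` C_Rplus \<subseteq> C1_Rplus_0 \<and> bij_betw (volterra_op \<Psi>) C_Rplus C1_Rplus_0"
proof -
  from assms(3) have sm: "smooth_Rplus \<Psi>" and \<Psi>0: "\<Psi> 0 = 0"
    and \<Psi>d: "\<And>t. t \<ge> 0 \<Longrightarrow> (\<Psi> has_vector_derivative (Rvec (\<alpha> y) (\<beta> y) (\<Psi> t) - lam)) (at t within {0..})"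
    unfolding riccati_solution_def by auto
  from sm obtain D :: "nat \<Rightarrow> real \<Rightarrow> real ^ ('n::{finite,wellorder})" where D0: "D 0 = \<Psi>"
    and Dd: "\<And>k t. t \<ge> 0 \<Longrightarrow> (D k has_vector_derivative D (Suc k) t) (at t within {0..})"
    unfolding smooth_Rplus_def by blast
  define gg where "gg = (\<lambda>k t. D k t \<bullet> e1)"
  have ggd: "\<And>k t. t \<ge> 0 \<Longrightarrow> (gg k has_real_derivative gg (Suc k) t) (at t within {0..})"
    unfolding gg_def by (rule inner_deriv[OF Dd])
  have cgg: "continuous_on {0..} (gg k)" for k by (rule deriv_cont[OF ggd])
  define g where "g = gg 1"
  define g' where "g' = gg 2"
  have gd: "\<And>t. t \<ge> 0 \<Longrightarrow> (g has_real_derivative g' t) (at t within {0..})"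
    unfolding g_def g'_def using ggd[of _ 1] by (simp add: numeral_2_eq_2)
  have g'd: "\<And>t. t \<ge> 0 \<Longrightarrow> (g' has_real_derivative gg 3 t) (at t within {0..})"
    unfolding g'_def using ggd[of _ 2] by (simp add: numeral_3_eq_3 numeral_2_eq_2)
  have cg': "continuous_on {0..} g'" unfolding g'_def by (rule cgg)
  have vd: "vector_derivative \<Psi> (at t within {0..}) = D 1 t" if "t \<ge> 0" for t
    by (rule vector_derivative_within[OF nb0[OF that]]) (use Dd[OF that, of 0] D0 in simp)
  define c where "c = g 0"
  have D10: "D 1 0 = Rvec (\<alpha> y) (\<beta> y) (\<Psi> 0) - lam"
    by (rule vector_derivative_unique_within[OF nb0[of 0]]) (use Dd[of 0 0] D0 \<Psi>d[of 0] in auto)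
  have c: "c = - (lam \<bullet> e1)" unfolding c_def g_def gg_def D10 \<Psi>0 Rvec_zero by simp
  have cnz: "c \<noteq> 0" using c assms(2) by simp
  have vo: "volterra_op \<Psi> \<theta> \<tau> = integral {0..\<tau>} (\<lambda>s. \<theta> s * g (\<tau> - s))" if "\<tau> \<ge> 0" for \<theta> \<tau>
    unfolding volterra_op_def using that by (auto intro!: integral_cong simp: vd g_def gg_def)
  define \<psi> where "\<psi> = (\<lambda>\<theta> \<tau>. \<theta> \<tau> * c + integral {0..\<tau>} (\<lambda>s. \<theta> s * g' (\<tau> - s)))"
  have der: "(volterra_op \<Psi> \<theta> has_real_derivative \<psi> \<theta> \<tau>) (at \<tau> within {0..})"
    if "continuous_on {0..} \<theta>" "\<tau> \<ge> 0" for \<theta> \<tau>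
    unfolding \<psi>_def c_def
    by (rule has_field_derivative_transform_within[OF conv_deriv[OF gd cg' that] zero_less_one])
       (use that in \<open>auto simp: vo\<close>)
  have c\<psi>: "continuous_on {0..} (\<psi> \<theta>)" if "continuous_on {0..} \<theta>" for \<theta>
    unfolding \<psi>_def by (intro continuous_intros that conv_cont[OF g'd cgg that])
  have img: "volterra_op \<Psi> \<theta> \<in> C1_Rplus_0" if "\<theta> \<in> C_Rplus" for \<theta>
  proof -
    have ct: "continuous_on {0..} \<theta>" using that by (simp add: C_Rplus_def)
    have d: "\<forall>t\<ge>0. (volterra_op \<Psi> \<theta> has_real_derivative \<psi> \<theta> t) (at t within {0..})"
      using der[OF ct] by blast
    have z: "volterra_op \<Psi> \<theta> 0 = 0" by (simp add: vo)
    have n: "\<forall>t<0. volterra_op \<Psi> \<theta> t = 0" by (simp add: volterra_op_def)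
    show ?thesis unfolding C1_Rplus_0_def mem_Collect_eq
      using c\<psi>[OF ct] d z n by blast
  qed
  have inj: "inj_on (volterra_op \<Psi>) C_Rplus"
  proof (rule inj_onI)
    fix \<theta>1 \<theta>2 assume t1: "\<theta>1 \<in> C_Rplus" and t2: "\<theta>2 \<in> C_Rplus" and eq: "volterra_op \<Psi> \<theta>1 = volterra_op \<Psi> \<theta>2"
    have c1: "continuous_on {0..} \<theta>1" and c2: "continuous_on {0..} \<theta>2" using t1 t2 by (auto simp: C_Rplus_def)
    define \<delta> where "\<delta> = (\<lambda>s. \<theta>1 s - \<theta>2 s)"
    have c\<delta>: "continuous_on {0..} \<delta>" unfolding \<delta>_def by (intro continuous_intros c1 c2)
    have cg: "continuous_on {0..} g" by (rule deriv_cont[OF gd])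
    have vz: "volterra_op \<Psi> \<delta> \<tau> = 0" if "\<tau> \<ge> 0" for \<tau>
    proof -
      have "volterra_op \<Psi> \<delta> \<tau> = volterra_op \<Psi> \<theta>1 \<tau> - volterra_op \<Psi> \<theta>2 \<tau>"
        unfolding vo[OF that] \<delta>_def left_diff_distrib
        by (rule integral_diff) (auto intro!: integrable_continuous_interval conv_int[OF cg] c1 c2)
      then show ?thesis using eq by simp
    qed
    define k where "k = (\<lambda>t. g' t / c)"
    have ck: "continuous_on {0..} k" unfolding k_def by (intro continuous_intros cg') (simp add: cnz)
    have \<delta>eq: "\<delta> \<tau> = - integral {0..\<tau>} (\<lambda>s. \<delta> s * k (\<tau> - s))" if \<tau>: "\<tau> \<ge> 0" for \<tau>
    proof -
      have z: "(volterra_op \<Psi> \<delta> has_real_derivative 0) (at \<tau> within {0..})"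
        by (rule has_field_derivative_transform_within[OF DERIV_const zero_less_one]) (use vz \<tau> in auto)
      have "\<psi> \<delta> \<tau> = 0"
        using vector_derivative_unique_within[OF nb0[OF \<tau>]] der[OF c\<delta> \<tau>] z
        by (auto simp: has_real_derivative_iff_has_vector_derivative)
      moreover have "integral {0..\<tau>} (\<lambda>s. \<delta> s * k (\<tau> - s)) = integral {0..\<tau>} (\<lambda>s. \<delta> s * g' (\<tau> - s)) / c"
        unfolding k_def by (simp only: times_divide_eq_right integral_divide)
      moreover have "\<And>x I. x * c + I = 0 \<Longrightarrow> x = - (I / c)" using cnz by (auto simp: field_simps)
      ultimately show ?thesis unfolding \<psi>_def by simp
    qed
    have "\<delta> \<tau> = 0" for \<tau>
    proof (cases "\<tau> \<ge> 0")
      case True then show ?thesis using volterra_unique[OF ck c\<delta>, of \<tau>] \<delta>eq by blast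
    next
      case False then show ?thesis using t1 t2 by (auto simp: C_Rplus_def \<delta>_def)
    qed
    then show "\<theta>1 = \<theta>2" by (auto simp: \<delta>_def fun_eq_iff)
  qed
  have surj: "C1_Rplus_0 \<subseteq> volterra_op \<Psi> ` C_Rplus"
  proof
    fix h assume "h \<in> C1_Rplus_0"
    then obtain h' where ch': "continuous_on {0..} h'"
      and hd: "\<And>t. t \<ge> 0 \<Longrightarrow> (h has_real_derivative h' t) (at t within {0..})"
      and h0: "h 0 = 0" and hneg: "\<And>t. t < 0 \<Longrightarrow> h t = 0"
      unfolding C1_Rplus_0_def by auto
    define k where "k = (\<lambda>t. g' t / c)"
    have kd: "\<And>t. t \<ge> 0 \<Longrightarrow> (k has_real_derivative gg 3 t / c) (at t within {0..})"
      unfolding k_def by (rule DERIV_cdivide[OF g'd])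
    have ck': "continuous_on {0..} (\<lambda>t. gg 3 t / c)" by (intro continuous_intros cgg) (simp add: cnz)
    have cf: "continuous_on {0..} (\<lambda>t. h' t / c)" by (intro continuous_intros ch') (simp add: cnz)
    obtain \<theta>0 where c0: "continuous_on {0..} \<theta>0"
      and e0: "\<And>\<tau>. \<tau> \<ge> 0 \<Longrightarrow> \<theta>0 \<tau> = h' \<tau> / c - integral {0..\<tau>} (\<lambda>s. \<theta>0 s * k (\<tau> - s))"
      using volterra_exists[OF kd ck' cf] by blast
    define \<theta> where "\<theta> = (\<lambda>t. if t \<ge> 0 then \<theta>0 t else 0)"
    have ct: "continuous_on {0..} \<theta>"
      using c0 by (rule continuous_on_eq) (auto simp: \<theta>_def)
    have tC: "\<theta> \<in> C_Rplus" using ct by (auto simp: C_Rplus_def \<theta>_def)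
    have e: "\<theta> \<tau> = h' \<tau> / c - integral {0..\<tau>} (\<lambda>s. \<theta> s * k (\<tau> - s))" if "\<tau> \<ge> 0" for \<tau>
    proof -
      have "integral {0..\<tau>} (\<lambda>s. \<theta> s * k (\<tau> - s)) = integral {0..\<tau>} (\<lambda>s. \<theta>0 s * k (\<tau> - s))"
        by (rule integral_cong) (auto simp: \<theta>_def)
      then show ?thesis using e0[OF that] that by (simp add: \<theta>_def)
    qed
    have p: "\<psi> \<theta> \<tau> = h' \<tau>" if "\<tau> \<ge> 0" for \<tau>
    proof -
      have "\<psi> \<theta> \<tau> = c * (\<theta> \<tau> + integral {0..\<tau>} (\<lambda>s. \<theta> s * k (\<tau> - s)))"
      proof -
        have "integral {0..\<tau>} (\<lambda>s. \<theta> s * k (\<tau> - s)) = integral {0..\<tau>} (\<lambda>s. \<theta> s * g' (\<tau> - s)) / c"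
          unfolding k_def by (simp only: times_divide_eq_right integral_divide)
        moreover have "\<And>x I. x * c + I = c * (x + I / c)" using cnz by (auto simp: field_simps)
        ultimately show ?thesis unfolding \<psi>_def by simp
      qed
      also have "\<dots> = h' \<tau>" using e[OF that] cnz by simp
      finally show ?thesis .
    qed
    have "\<exists>C. \<forall>x\<in>{0..}. volterra_op \<Psi> \<theta> x - h x = C"
    proof (rule has_field_derivative_zero_constant)
      fix x :: real assume x: "x \<in> {0..}"
      have "((\<lambda>x. volterra_op \<Psi> \<theta> x - h x) has_real_derivative \<psi> \<theta> x - h' x) (at x within {0..})"
        using DERIV_diff[OF der[OF ct] hd] x by simp
      then show "((\<lambda>x. volterra_op \<Psi> \<theta> x - h x) has_real_derivative 0) (at x within {0..})"
        using p x by simp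
    qed auto
    then obtain C where C: "\<And>x. x \<ge> 0 \<Longrightarrow> volterra_op \<Psi> \<theta> x - h x = C" by auto
    have "C = 0" using C[of 0] h0 by (simp add: vo)
    have "volterra_op \<Psi> \<theta> x = h x" for x
    proof (cases "x \<ge> 0")
      case True then show ?thesis using C[OF True] \<open>C = 0\<close> by simp
    next
      case False then show ?thesis using hneg[of x] by (simp add: volterra_op_def)
    qed
    then have "volterra_op \<Psi> \<theta> = h" by (rule ext)
    then show "h \<in> volterra_op \<Psi> ` C_Rplus" using tC by blast
  qed
  have sub: "volterra_op \<Psi> ` C_Rplus \<subseteq> C1_Rplus_0" using img by blast
  show ?thesis using sub surj inj unfolding bij_betw_def by blast
qed


end
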